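(* Let $d,m,n,q$ be positive integers with $d\ll m\ll n$, let $c_z>0$, let $\bm{Z}=[\bm{z}_1,\ldots,\bm{z}_n]\in\mathbb{R}^{d\times n}$ be full-rank with $\Vert\bm{Z}\Vert_\infty\leq c_z$, let $f:\mathbb{R}^d\to\mathbb{R}^m$ be analytic, and let $\bm{X}=[\bm{x}_1,\ldots,\bm{x}_n]\in\mathbb{R}^{m\times n}$ with $\bm{x}_j=f(\bm{z}_j)$ for $j=1,\ldots,n$. Let $\phi:\mathbb{R}^m\to\mathbb{R}^l$ be a $q$-order polynomial feature map (with $l=\binom{m+q}{q}$) and $\phi(\bm{X})=[\phi(\bm{x}_1),\ldots,\phi(\bm{x}_n)]\in\mathbb{R}^{l\times n}$. Then for any positive integer $q'$ obeying $\binom{d+q'}{q'}\leq\min\{l,n\}$, there exists a matrix $\bm{\Phi}\in\mathbb{R}^{l\times n}$ with $\textup{rank}(\bm{\Phi})\leq\binom{d+q'}{q'}$ such that $$\Vert\phi(\bm{X})-\bm{\Phi}\Vert_\infty\leq c_{q'},\qquad c_{q'}=\frac{c_z^{q'+1}}{(q'+1)!}\max_{\Vert\bm{z}\Vert_\infty\leq c_z}\Vert(\phi\circ f)^{(q'+1)}(\bm{z})\Vert_\infty .$$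
   Context: For a matrix $\bm{Y}$, $\Vert\bm{Y}\Vert_\infty=\max_{ij}|Y_{ij}|$. A $q$-order polynomial feature map of $\bm{x}\in\mathbb{R}^m$ is $\phi(\bm{x})=(c_\mu x_1^{\mu_1}x_2^{\mu_2}\cdots x_m^{\mu_m})_{|\mu|\leq q}\in\mathbb{R}^l$, where $\mu=(\mu_1,\ldots,\mu_m)$ ranges over all multi-indices of non-negative integers with $|\mu|=\mu_1+\cdots+\mu_m\leq q$, the parameters $c_\mu$ are nonzero real numbers, and $l=\binom{m+q}{q}$. For a smooth map $g:\mathbb{R}^d\to\mathbb{R}^l$, $g^{(k)}$ denotes its $k$-th order derivative and $\Vert g^{(k)}(\bm{z})\Vert_\infty$ denotes $\max_{i}\sup_{\Vert\bm{h}\Vert_\infty\leq 1}|D^kg_i(\bm{z})[\bm{h},\ldots,\bm{h}]|$, the largest (over output coordinates $g_i$) $\ell_\infty$-size of the $k$-th derivative. *)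

theory Defs
  imports "HOL-Analysis.Analysis"
begin

definition mat_inf_norm :: "real^'n^'m \<Rightarrow> real" where
  "mat_inf_norm Y = Max {\<bar>Y $ i $ j\<bar> | i j. True}"

definition real_analytic_at :: "(real^'d \<Rightarrow> real) \<Rightarrow> real^'d \<Rightarrow> bool" where
  "real_analytic_at g z0 \<longleftrightarrow>
     (\<exists>r>0. \<exists>a :: ('d \<Rightarrow> nat) \<Rightarrow> real.
        \<forall>z. (\<forall>i. \<bar>z $ i - z0 $ i\<bar> < r) \<longrightarrow>
           ((\<lambda>\<mu>. a \<mu> * (\<Prod>i\<in>UNIV. (z $ i - z0 $ i) ^ \<mu> i)) has_sum g z) UNIV)"

definition real_analytic :: "(real^'d \<Rightarrow> real^'m) \<Rightarrow> bool" where
  "real_analytic f \<longleftrightarrow> (\<forall>k z0. real_analytic_at (\<lambda>z. f z $ k) z0)"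

text \<open>k-th derivative form D^k g_i(z)[h,...,h], written as the k-th derivative of
  t \<mapsto> g_i(z + t h) at t = 0.\<close>
definition dform :: "(real^'d \<Rightarrow> real^'l) \<Rightarrow> nat \<Rightarrow> 'l \<Rightarrow> real^'d \<Rightarrow> real^'d \<Rightarrow> real" where
  "dform g k i z h = (deriv ^^ k) (\<lambda>t. g (z + t *\<^sub>R h) $ i) 0"

definition deriv_inf_norm :: "(real^'d \<Rightarrow> real^'l) \<Rightarrow> nat \<Rightarrow> real^'d \<Rightarrow> real" where
  "deriv_inf_norm g k z =
     Max (range (\<lambda>i. SUP h\<in>{h. \<forall>j. \<bar>h $ j\<bar> \<le> 1}. \<bar>dform g k i z h\<bar>))"

definition multi_indices :: "nat \<Rightarrow> ('m::finite \<Rightarrow> nat) set" where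
  "multi_indices q = {\<mu>. sum \<mu> UNIV \<le> q}"

text \<open>q-order polynomial feature map: coordinates (indexed via the enumeration \<nu>
  of the multi-indices) are c_\<mu> x^\<mu>.\<close>
definition poly_feature :: "('l \<Rightarrow> ('m \<Rightarrow> nat)) \<Rightarrow> (('m \<Rightarrow> nat) \<Rightarrow> real) \<Rightarrow> real^'m \<Rightarrow> real^'l" where
  "poly_feature \<nu> c x = (\<chi> i. c (\<nu> i) * (\<Prod>j\<in>UNIV. (x $ j) ^ (\<nu> i j)))"

end

theory Submission
  imports Defs "HOL-Library.Multiset" "HOL-Computational_Algebra.Polynomial"
begin

definition ps_at :: "(real \<Rightarrow> real) \<Rightarrow> real \<Rightarrow> (nat \<Rightarrow> real) \<Rightarrow> real \<Rightarrow> bool" where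
  "ps_at u t0 b r \<longleftrightarrow> r > 0 \<and> (\<forall>s. \<bar>s\<bar> < r \<longrightarrow> (\<lambda>n. b n * s^n) sums u (t0 + s))"

lemma ps_at_deriv:
  assumes "ps_at u t0 b r"
  shows "ps_at (deriv u) t0 (diffs b) r"
    and "\<And>s. \<bar>s\<bar> < r \<Longrightarrow> (u has_real_derivative deriv u (t0+s)) (at (t0+s))"
proof -
  have r: "r > 0" and S: "\<And>s. \<bar>s\<bar> < r \<Longrightarrow> (\<lambda>n. b n * s^n) sums u (t0 + s)"
    using assms by (auto simp: ps_at_def)
  define v where "v = (\<lambda>s. \<Sum>n. b n * s^n)"
  have sm: "\<And>z. norm z < r \<Longrightarrow> summable (\<lambda>n. b n * z ^ n)"
    using S sums_summable by fastforce
  have uv: "\<And>x. x \<in> {x. \<bar>x - t0\<bar> < r} \<Longrightarrow> v (x - t0) = u x"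
    using S unfolding v_def by (metis mem_Collect_eq add_diff_cancel_left' diff_add_cancel sums_unique add.commute)
  have D: "(u has_real_derivative (\<Sum>n. diffs b n * s^n)) (at (t0+s))" if s: "\<bar>s\<bar> < r" for s
  proof -
    have "(v has_real_derivative (\<Sum>n. diffs b n * s^n)) (at s)"
      unfolding v_def by (rule termdiffs_strong'[of r]) (use sm s in auto)
    then have "((\<lambda>x. v (x - t0)) has_real_derivative (\<Sum>n. diffs b n * s^n)) (at (t0+s))"
      using DERIV_shift[of v _ "t0+s" "-t0"] by simp
    then show ?thesis
      by (rule has_field_derivative_transform_within_open[where S="{x. \<bar>x - t0\<bar> < r}"])
         (use s uv in \<open>auto simp: open_Collect_less continuous_intros\<close>)
  qed
  have dd: "deriv u (t0+s) = (\<Sum>n. diffs b n * s^n)" if "\<bar>s\<bar> < r" for s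
    using D[OF that] by (rule DERIV_imp_deriv)
  show "ps_at (deriv u) t0 (diffs b) r"
    unfolding ps_at_def
  proof (intro conjI allI impI r)
    fix s :: real assume s: "\<bar>s\<bar> < r"
    have "summable (\<lambda>n. diffs b n * s^n)"
      by (rule termdiff_converges[of s r]) (use s sm in auto)
    then show "(\<lambda>n. diffs b n * s^n) sums deriv u (t0 + s)"
      using dd[OF s] by (simp add: summable_sums)
  qed
  show "\<And>s. \<bar>s\<bar> < r \<Longrightarrow> (u has_real_derivative deriv u (t0+s)) (at (t0+s))"
    using D dd by simp
qed

lemma ps_at_derivs:
  assumes "ps_at u t0 b r"
  shows "ps_at ((deriv^^k) u) t0 ((diffs^^k) b) r"
  using assms by (induction k) (auto intro: ps_at_deriv)

lemma diffs_pow_0: "(diffs^^k) b 0 = fact k * (b k :: real)"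
proof (induction k arbitrary: b)
  case 0 then show ?case by simp
next
  case (Suc k)
  have "(diffs^^Suc k) b 0 = (diffs^^k) (diffs b) 0" by (simp add: funpow_Suc_right del: funpow.simps)
  also have "\<dots> = fact k * diffs b k" using Suc by simp
  also have "\<dots> = fact (Suc k) * b (Suc k)" unfolding diffs_def by (simp add: algebra_simps)
  finally show ?case .
qed

lemma ps_at_derivs_val:
  assumes "ps_at u t0 b r"
  shows "(deriv^^k) u t0 = fact k * b k"
proof -
  have "ps_at ((deriv^^k) u) t0 ((diffs^^k) b) r" by (rule ps_at_derivs[OF assms])
  then have "(\<lambda>n. (diffs^^k) b n * 0^n) sums (deriv^^k) u (t0 + 0)"
    unfolding ps_at_def by (metis abs_zero)
  then show ?thesis by (simp add: diffs_pow_0)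
qed

lemma ps_at_DERIV:
  assumes "ps_at u t0 b r"
  shows "((deriv^^m) u has_real_derivative (deriv^^(Suc m)) u t0) (at t0)"
  using ps_at_deriv(2)[OF ps_at_derivs[OF assms, of m], of 0] assms
  by (simp add: ps_at_def)

lemma ps_at_unique:
  assumes "ps_at u t0 b r" "ps_at u t0 b' r'"
  shows "b = b'"
proof
  fix k show "b k = b' k"
    using ps_at_derivs_val[OF assms(1), of k] ps_at_derivs_val[OF assms(2), of k] by simp
qed

definition mnm :: "('d::finite \<Rightarrow> nat) \<Rightarrow> real^'d \<Rightarrow> real" where
  "mnm \<alpha> h = (\<Prod>i\<in>UNIV. (h$i)^(\<alpha> i))"

inductive_set Pn :: "nat \<Rightarrow> (real^'d::finite \<Rightarrow> real) set" for n where
  gen: "sum \<alpha> UNIV \<le> n \<Longrightarrow> mnm \<alpha> \<in> Pn n"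
| zero: "(\<lambda>h. 0) \<in> Pn n"
| add: "p \<in> Pn n \<Longrightarrow> p' \<in> Pn n \<Longrightarrow> (\<lambda>h. p h + p' h) \<in> Pn n"
| scale: "p \<in> Pn n \<Longrightarrow> (\<lambda>h. a * p h) \<in> Pn n"

lemma Pn_mono: "p \<in> Pn m \<Longrightarrow> m \<le> n \<Longrightarrow> p \<in> Pn n"
  by (induction rule: Pn.induct) (auto intro: Pn.intros)

lemma mnm_mult: "mnm \<alpha> h * mnm \<beta> h = mnm (\<lambda>i. \<alpha> i + \<beta> i) h"
  unfolding mnm_def by (simp add: power_add prod.distrib)

lemma Pn_mult_gen:
  assumes a: "sum \<alpha> UNIV \<le> a" and "p \<in> Pn b"
  shows "(\<lambda>h. mnm \<alpha> h * p h) \<in> Pn (a+b)"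
  using assms(2)
proof (induction rule: Pn.induct)
  case (gen \<beta>)
  have "(\<lambda>h. mnm \<alpha> h * mnm \<beta> h) = mnm (\<lambda>i. \<alpha> i + \<beta> i)" by (simp add: mnm_mult fun_eq_iff)
  moreover have "sum (\<lambda>i. \<alpha> i + \<beta> i) UNIV \<le> a + b" using gen a by (simp add: sum.distrib)
  ultimately show ?case by (metis Pn.gen)
next
  case zero then show ?case by (simp add: Pn.zero)
next
  case (add p p') then show ?case by (simp add: distrib_left Pn.add)
next
  case (scale p c)
  have "(\<lambda>h. c * (mnm \<alpha> h * p h)) \<in> Pn (a+b)" using scale.IH by (rule Pn.scale)
  then show ?case by (simp add: mult.left_commute)
qed

lemma Pn_mult: "p \<in> Pn a \<Longrightarrow> p' \<in> Pn b \<Longrightarrow> (\<lambda>h. p h * p' h) \<in> Pn (a+b)"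
proof (induction rule: Pn.induct)
  case (gen \<alpha>) then show ?case by (simp add: Pn_mult_gen)
next
  case zero then show ?case by (simp add: Pn.zero)
next
  case (add p q) then show ?case by (simp add: distrib_right Pn.add)
next
  case (scale p c)
  have "(\<lambda>h. c * (p h * p' h)) \<in> Pn (a+b)" using scale by (intro Pn.scale) blast
  then show ?case by (simp add: mult.assoc)
qed

lemma Pn_sum: "finite S \<Longrightarrow> (\<And>k. k \<in> S \<Longrightarrow> p k \<in> Pn n) \<Longrightarrow> (\<lambda>h. \<Sum>k\<in>S. p k h) \<in> Pn n"
  by (induction S rule: finite_induct) (auto intro: Pn.intros)

lemma Pn_const: "(\<lambda>h. a) \<in> Pn n"
proof -
  have "mnm (\<lambda>i. 0) \<in> Pn n" by (rule Pn.gen) simp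
  then have "(\<lambda>h. a * mnm (\<lambda>i. 0) h) \<in> Pn n" by (rule Pn.scale)
  then show ?thesis by (simp add: mnm_def)
qed

lemma Pn_scale_arg: "p \<in> Pn n \<Longrightarrow> (\<lambda>h. p (c *\<^sub>R h)) \<in> Pn n"
proof (induction rule: Pn.induct)
  case (gen \<alpha>)
  have "mnm \<alpha> (c *\<^sub>R h) = c ^ sum \<alpha> UNIV * mnm \<alpha> h" for h
    unfolding mnm_def by (simp add: power_mult_distrib prod.distrib power_sum)
  moreover have "(\<lambda>h. c ^ sum \<alpha> UNIV * mnm \<alpha> h) \<in> Pn n" using gen by (intro Pn.intros)
  ultimately show ?case by simp
qed (auto intro: Pn.intros)

lemma Pn_span:
  fixes Z :: "real^'n::finite^'d::finite"
  shows "p \<in> Pn n \<Longrightarrow> (\<chi> j. p (column j Z)) \<in> span {(\<chi> j. mnm \<alpha> (column j Z)) | \<alpha>. sum \<alpha> UNIV \<le> n}"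
proof (induction rule: Pn.induct)
  case (gen \<alpha>) then show ?case by (intro span_base) auto
next
  case zero
  have "(\<chi> j. (0::real)) = (0::real^'n)" by (simp add: vec_eq_iff)
  then show ?case by (simp add: span_zero)
next
  case (add p p')
  have "(\<chi> j. p (column j Z) + p' (column j Z)) = (\<chi> j. p (column j Z)) + (\<chi> j. p' (column j Z))"
    by (simp add: vec_eq_iff)
  then show ?case using add by (simp add: span_add)
next
  case (scale p a)
  have "(\<chi> j. a * p (column j Z)) = a *\<^sub>R (\<chi> j. p (column j Z))"
    by (simp add: vec_eq_iff)
  then show ?case using scale by (simp add: span_mul)
qed

definition MI :: "nat \<Rightarrow> ('d::finite \<Rightarrow> nat) set" where
  "MI n = {\<alpha>. sum \<alpha> UNIV \<le> n}"

lemma MI_image: "MI n \<subseteq> (\<lambda>M i. count M (Some i)) ` multisets_of_size (UNIV :: 'd::finite option set) n"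
proof
  fix \<alpha> :: "'d \<Rightarrow> nat" assume a: "\<alpha> \<in> MI n"
  define M where "M = (\<Sum>i\<in>UNIV. replicate_mset (\<alpha> i) (Some i)) + replicate_mset (n - sum \<alpha> UNIV) None"
  have c: "count M (Some i) = \<alpha> i" for i
  proof -
    have "count (\<Sum>k\<in>UNIV. replicate_mset (\<alpha> k) (Some k)) (Some i) = (\<Sum>k\<in>UNIV. if k = i then \<alpha> k else 0)"
      by (simp add: count_sum)
    then show ?thesis by (simp add: M_def)
  qed
  have "size M = n" using a by (simp add: M_def MI_def)
  then have "M \<in> multisets_of_size UNIV n" by (simp add: multisets_of_size_def)
  then show "\<alpha> \<in> (\<lambda>M i. count M (Some i)) ` multisets_of_size UNIV n"
    using c by (intro image_eqI[of _ _ M]) auto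
qed

lemma MI_finite: "finite (MI n :: ('d::finite \<Rightarrow> nat) set)"
  by (rule finite_subset[OF MI_image]) (auto intro!: finite_imageI finite_multisets_of_size)

lemma MI_card: "card (MI n :: ('d::finite \<Rightarrow> nat) set) \<le> (CARD('d) + n) choose n"
proof -
  have "card (MI n :: ('d \<Rightarrow> nat) set) \<le> card ((\<lambda>M i. count M (Some i)) ` multisets_of_size (UNIV :: 'd option set) n)"
    by (rule card_mono[OF _ MI_image]) (auto intro!: finite_imageI finite_multisets_of_size)
  also have "\<dots> \<le> card (multisets_of_size (UNIV :: 'd option set) n)" by (rule card_image_le) (auto intro!: finite_multisets_of_size)
  also have "\<dots> = (CARD('d) + n) choose n"
    by (subst card_multisets_of_size) (auto simp: card_UNIV_option)
  finally show ?thesis .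
qed

definition good_at :: "(real^'d::finite \<Rightarrow> real) \<Rightarrow> real^'d \<Rightarrow> bool" where
  "good_at F y \<longleftrightarrow> (\<exists>r>0. \<exists>M\<ge>0. \<exists>R\<ge>1. \<exists>C. (\<forall>n. C n 0 \<in> Pn n) \<and>
    (\<forall>w h s. (\<forall>i. \<bar>w$i\<bar> < r) \<longrightarrow> (\<forall>i. \<bar>h$i\<bar> \<le> 1) \<longrightarrow> \<bar>s\<bar> < r \<longrightarrow>
        (\<lambda>n. C n w h * s^n) sums F (y + w + s *\<^sub>R h)) \<and>
    (\<forall>n w h. (\<forall>i. \<bar>w$i\<bar> < r) \<longrightarrow> (\<forall>i. \<bar>h$i\<bar> \<le> 1) \<longrightarrow> \<bar>C n w h\<bar> \<le> M * R^n))"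

lemma good_atE:
  assumes "good_at F y"
  obtains r M R C where "r > 0" "M \<ge> 0" "R \<ge> 1" "\<And>n. C n 0 \<in> Pn n"
    "\<And>w h s. (\<forall>i. \<bar>w$i\<bar> < r) \<Longrightarrow> (\<forall>i. \<bar>h$i\<bar> \<le> 1) \<Longrightarrow> \<bar>s\<bar> < r \<Longrightarrow>
        (\<lambda>n. C n w h * s^n) sums F (y + w + s *\<^sub>R h)"
    "\<And>n w h. (\<forall>i. \<bar>w$i\<bar> < r) \<Longrightarrow> (\<forall>i. \<bar>h$i\<bar> \<le> 1) \<Longrightarrow> \<bar>C n w h\<bar> \<le> M * R^n"
proof -
  from assms obtain r M R C where "r > 0" "M \<ge> 0" "R \<ge> 1" "\<forall>n. C n 0 \<in> Pn n"
    "\<forall>w h s. (\<forall>i. \<bar>w$i\<bar> < r) \<longrightarrow> (\<forall>i. \<bar>h$i\<bar> \<le> 1) \<longrightarrow> \<bar>s\<bar> < r \<longrightarrow>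
        (\<lambda>n. C n w h * s^n) sums F (y + w + s *\<^sub>R h)"
    "\<forall>n w h. (\<forall>i. \<bar>w$i\<bar> < r) \<longrightarrow> (\<forall>i. \<bar>h$i\<bar> \<le> 1) \<longrightarrow> \<bar>C n w h\<bar> \<le> M * R^n"
    unfolding good_at_def by (elim exE conjE) assumption
  note facts = this
  show ?thesis by (rule that[of r M R C]) (use facts in blast)+
qed

lemma powser_abs_conv:
  fixes c :: "nat \<Rightarrow> real"
  assumes "\<And>s. \<bar>s\<bar> < r \<Longrightarrow> (\<lambda>n. c n * s^n) sums X s" "\<bar>s\<bar> < r"
  shows "summable (\<lambda>n. norm (c n * s^n))"
proof (rule powser_insidea)
  show "summable (\<lambda>n. c n * ((\<bar>s\<bar> + r)/2)^n)"
    using assms(1)[of "(\<bar>s\<bar> + r)/2"] assms(2) sums_summable by fastforce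
  show "norm s < norm ((\<bar>s\<bar> + r)/2)" using assms(2) by auto
qed

lemma good_at_const: "good_at (\<lambda>x. K) y"
proof -
  have P: "\<forall>n. (\<lambda>h. if n = 0 then K else 0) \<in> Pn n" by (simp add: Pn_const)
  have S: "\<forall>(w::real^'a) (h::real^'a) s. (\<forall>i. \<bar>w$i\<bar> < 1) \<longrightarrow> (\<forall>i. \<bar>h$i\<bar> \<le> 1) \<longrightarrow> \<bar>s\<bar> < 1 \<longrightarrow>
        (\<lambda>n. (if n = 0 then K else 0) * s^n) sums K"
  proof (intro allI impI)
    fix w h :: "real^'a" and s :: real
    have "(\<lambda>n. (if n = 0 then K else 0) * s^n) = (\<lambda>n. if n = 0 then K else 0)" by auto
    then show "(\<lambda>n. (if n = 0 then K else 0) * s^n) sums K"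
      using sums_single[of 0 "\<lambda>_. K"] by simp
  qed
  have B: "\<forall>n (w::real^'a) (h::real^'a). (\<forall>i. \<bar>w$i\<bar> < 1) \<longrightarrow> (\<forall>i. \<bar>h$i\<bar> \<le> 1) \<longrightarrow>
        \<bar>(if n = 0 then K else 0)\<bar> \<le> \<bar>K\<bar> * 1^n" by simp
  show ?thesis unfolding good_at_def
    apply (rule exI[where x=1], rule conjI, simp)
    apply (rule exI[where x="\<bar>K\<bar>"], rule conjI, simp)
    apply (rule exI[where x=1], rule conjI, simp)
    apply (rule exI[where x="\<lambda>n w h. if n = 0 then K else 0"])
    using P S B by simp
qed

lemma two_pow_ge: "real (Suc n) \<le> 2^n"
  by (induction n) auto

lemma good_at_mult:
  assumes "good_at F y" "good_at G y"
  shows "good_at (\<lambda>x. F x * G x) y"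
proof -
  obtain r1 M1 R1 C1 where r1: "r1 > 0" "M1 \<ge> 0" "R1 \<ge> 1" and P1: "\<And>n. C1 n 0 \<in> Pn n"
    and S1: "\<And>w h s. (\<forall>i. \<bar>w$i\<bar> < r1) \<Longrightarrow> (\<forall>i. \<bar>h$i\<bar> \<le> 1) \<Longrightarrow> \<bar>s\<bar> < r1 \<Longrightarrow>
        (\<lambda>n. C1 n w h * s^n) sums F (y + w + s *\<^sub>R h)"
    and B1: "\<And>n w h. (\<forall>i. \<bar>w$i\<bar> < r1) \<Longrightarrow> (\<forall>i. \<bar>h$i\<bar> \<le> 1) \<Longrightarrow> \<bar>C1 n w h\<bar> \<le> M1 * R1^n"
    by (rule good_atE[OF assms(1)]) blast
  obtain r2 M2 R2 C2 where r2: "r2 > 0" "M2 \<ge> 0" "R2 \<ge> 1" and P2: "\<And>n. C2 n 0 \<in> Pn n"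
    and S2: "\<And>w h s. (\<forall>i. \<bar>w$i\<bar> < r2) \<Longrightarrow> (\<forall>i. \<bar>h$i\<bar> \<le> 1) \<Longrightarrow> \<bar>s\<bar> < r2 \<Longrightarrow>
        (\<lambda>n. C2 n w h * s^n) sums G (y + w + s *\<^sub>R h)"
    and B2: "\<And>n w h. (\<forall>i. \<bar>w$i\<bar> < r2) \<Longrightarrow> (\<forall>i. \<bar>h$i\<bar> \<le> 1) \<Longrightarrow> \<bar>C2 n w h\<bar> \<le> M2 * R2^n"
    by (rule good_atE[OF assms(2)]) blast
  define r where "r = min r1 r2"
  define Rm where "Rm = max R1 R2"
  define C where "C = (\<lambda>n w h. \<Sum>i\<le>n. C1 i w h * C2 (n - i) w h)"
  have r0: "r > 0" using r1 r2 by (simp add: r_def)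
  have M0: "M1 * M2 \<ge> 0" using r1 r2 by simp
  have R0: "2 * Rm \<ge> 1" using r1 by (simp add: Rm_def)
  have P: "\<forall>n. C n 0 \<in> Pn n"
  proof
    fix n
    have "(\<lambda>h. \<Sum>i\<le>n. C1 i 0 h * C2 (n - i) 0 h) \<in> Pn n"
    proof (rule Pn_sum)
      fix i assume "i \<in> {..n}"
      then have "i + (n - i) = n" by simp
      then show "(\<lambda>h. C1 i 0 h * C2 (n - i) 0 h) \<in> Pn n"
        using Pn_mult[OF P1[of i] P2[of "n-i"]] by simp
    qed simp
    then show "C n 0 \<in> Pn n" by (simp add: C_def)
  qed
  have S: "\<forall>w h s. (\<forall>i. \<bar>w$i\<bar> < r) \<longrightarrow> (\<forall>i. \<bar>h$i\<bar> \<le> 1) \<longrightarrow> \<bar>s\<bar> < r \<longrightarrow>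
        (\<lambda>n. C n w h * s^n) sums (F (y + w + s *\<^sub>R h) * G (y + w + s *\<^sub>R h))"
  proof (intro allI impI)
    fix w h :: "real^'a" and s :: real
    assume w: "\<forall>i. \<bar>w$i\<bar> < r" and h: "\<forall>i. \<bar>h$i\<bar> \<le> 1" and s: "\<bar>s\<bar> < r"
    have w1: "\<forall>i. \<bar>w$i\<bar> < r1" and w2: "\<forall>i. \<bar>w$i\<bar> < r2" using w by (auto simp: r_def)
    have s1: "\<bar>s\<bar> < r1" and s2: "\<bar>s\<bar> < r2" using s by (auto simp: r_def)
    have a1: "summable (\<lambda>n. norm (C1 n w h * s^n))"
      by (rule powser_abs_conv[where X="\<lambda>s. F (y + w + s *\<^sub>R h)"]) (use S1[OF w1 h] s1 in auto)
    have a2: "summable (\<lambda>n. norm (C2 n w h * s^n))"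
      by (rule powser_abs_conv[where X="\<lambda>s. G (y + w + s *\<^sub>R h)"]) (use S2[OF w2 h] s2 in auto)
    have "(\<lambda>k. \<Sum>i\<le>k. (C1 i w h * s^i) * (C2 (k - i) w h * s^(k-i))) sums
          ((\<Sum>k. C1 k w h * s^k) * (\<Sum>k. C2 k w h * s^k))"
      by (rule Cauchy_product_sums[OF a1 a2])
    moreover have "(\<Sum>k. C1 k w h * s^k) = F (y + w + s *\<^sub>R h)" using S1[OF w1 h s1] by (simp add: sums_iff)
    moreover have "(\<Sum>k. C2 k w h * s^k) = G (y + w + s *\<^sub>R h)" using S2[OF w2 h s2] by (simp add: sums_iff)
    moreover have "(\<Sum>i\<le>k. (C1 i w h * s^i) * (C2 (k - i) w h * s^(k-i))) = C k w h * s^k" for k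
    proof -
      have "(\<Sum>i\<le>k. (C1 i w h * s^i) * (C2 (k - i) w h * s^(k-i))) = (\<Sum>i\<le>k. C1 i w h * C2 (k - i) w h * s^k)"
      proof (rule sum.cong)
        fix i assume "i \<in> {..k}"
        then have "s^i * s^(k-i) = s^k" by (simp flip: power_add)
        then show "(C1 i w h * s^i) * (C2 (k - i) w h * s^(k-i)) = C1 i w h * C2 (k - i) w h * s^k"
          by (metis mult.assoc mult.left_commute)
      qed simp
      then show ?thesis by (simp add: C_def sum_distrib_right)
    qed
    ultimately show "(\<lambda>n. C n w h * s^n) sums (F (y + w + s *\<^sub>R h) * G (y + w + s *\<^sub>R h))" by simp
  qed
  have B: "\<forall>n w h. (\<forall>i. \<bar>w$i\<bar> < r) \<longrightarrow> (\<forall>i. \<bar>h$i\<bar> \<le> 1) \<longrightarrow> \<bar>C n w h\<bar> \<le> M1 * M2 * (2 * Rm)^n"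
  proof (intro allI impI)
    fix n w h
    assume w: "\<forall>i. \<bar>(w::real^'a)$i\<bar> < r" and h: "\<forall>i. \<bar>(h::real^'a)$i\<bar> \<le> 1"
    have w1: "\<forall>i. \<bar>w$i\<bar> < r1" and w2: "\<forall>i. \<bar>w$i\<bar> < r2" using w by (auto simp: r_def)
    have "\<bar>C n w h\<bar> \<le> (\<Sum>i\<le>n. \<bar>C1 i w h * C2 (n - i) w h\<bar>)" unfolding C_def by (rule sum_abs)
    also have "\<dots> \<le> (\<Sum>i\<le>n. M1 * M2 * Rm^n)"
    proof (rule sum_mono)
      fix i assume i: "i \<in> {..n}"
      have "\<bar>C1 i w h * C2 (n - i) w h\<bar> = \<bar>C1 i w h\<bar> * \<bar>C2 (n - i) w h\<bar>" by (simp add: abs_mult)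
      also have "\<dots> \<le> (M1 * R1^i) * (M2 * R2^(n-i))"
        by (rule mult_mono) (use B1[OF w1 h] B2[OF w2 h] r1 r2 in auto)
      also have "\<dots> \<le> (M1 * Rm^i) * (M2 * Rm^(n-i))"
        by (intro mult_mono power_mono mult_left_mono) (use r1 r2 in \<open>auto simp: Rm_def\<close>)
      also have "\<dots> = M1 * M2 * Rm^n" using i by (simp add: algebra_simps flip: power_add)
      finally show "\<bar>C1 i w h * C2 (n - i) w h\<bar> \<le> M1 * M2 * Rm^n" .
    qed
    also have "\<dots> = real (Suc n) * (M1 * M2 * Rm^n)" by simp
    also have "\<dots> \<le> 2^n * (M1 * M2 * Rm^n)"
      by (rule mult_right_mono[OF two_pow_ge]) (use r1 r2 in \<open>auto simp: Rm_def\<close>)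
    also have "\<dots> = M1 * M2 * (2 * Rm)^n" by (simp add: power_mult_distrib)
    finally show "\<bar>C n w h\<bar> \<le> M1 * M2 * (2 * Rm)^n" .
  qed
  show ?thesis unfolding good_at_def
    apply (rule exI[where x=r], rule conjI, rule r0)
    apply (rule exI[where x="M1 * M2"], rule conjI, rule M0)
    apply (rule exI[where x="2 * Rm"], rule conjI, rule R0)
    apply (rule exI[where x=C])
    using P S B by blast
qed

lemma good_at_prod:
  assumes "finite S" "\<And>k. k \<in> S \<Longrightarrow> good_at (F k) y"
  shows "good_at (\<lambda>x. \<Prod>k\<in>S. F k x) y"
  using assms by (induction S rule: finite_induct) (auto intro: good_at_const good_at_mult)

lemma good_at_power:
  assumes "good_at F y"
  shows "good_at (\<lambda>x. F x ^ m) y"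
  by (induction m) (auto intro: good_at_const good_at_mult assms)

definition maj :: "real poly \<Rightarrow> real poly \<Rightarrow> bool" where
  "maj p P \<longleftrightarrow> (\<forall>n. \<bar>coeff p n\<bar> \<le> coeff P n)"

lemma maj_nonneg: "maj p P \<Longrightarrow> coeff P n \<ge> 0"
  unfolding maj_def by (meson abs_ge_zero order_trans)

lemma maj_mult: assumes "maj p P" "maj q Q" shows "maj (p*q) (P*Q)"
  unfolding maj_def
proof
  fix n
  have "\<bar>coeff (p*q) n\<bar> \<le> (\<Sum>i\<le>n. \<bar>coeff p i * coeff q (n-i)\<bar>)"
    unfolding coeff_mult by (rule sum_abs)
  also have "\<dots> \<le> (\<Sum>i\<le>n. coeff P i * coeff Q (n-i))"
  proof (rule sum_mono)
    fix i
    show "\<bar>coeff p i * coeff q (n-i)\<bar> \<le> coeff P i * coeff Q (n-i)"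
      unfolding abs_mult
      by (rule mult_mono) (use assms maj_nonneg[OF assms(1)] in \<open>auto simp: maj_def\<close>)
  qed
  also have "\<dots> = coeff (P*Q) n" by (simp add: coeff_mult)
  finally show "\<bar>coeff (p*q) n\<bar> \<le> coeff (P*Q) n" .
qed

lemma maj_one: "maj 1 1"
  unfolding maj_def by (simp add: coeff_1)

lemma maj_power: "maj p P \<Longrightarrow> maj (p^k) (P^k)"
  by (induction k) (auto intro: maj_mult maj_one)

lemma maj_prod: "finite S \<Longrightarrow> (\<And>i. i \<in> S \<Longrightarrow> maj (p i) (P i)) \<Longrightarrow> maj (\<Prod>i\<in>S. p i) (\<Prod>i\<in>S. P i)"
  by (induction S rule: finite_induct) (auto intro: maj_mult maj_one)

lemma maj_lin: "maj [:a, b:] [:\<bar>a\<bar>, \<bar>b\<bar>:]"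
  unfolding maj_def
proof
  fix n show "\<bar>coeff [:a, b:] n\<bar> \<le> coeff [:\<bar>a\<bar>, \<bar>b\<bar>:] n"
    by (cases n; cases "n - 1") (auto simp: coeff_pCons)
qed

lemma poly_as_sum_ge:
  fixes P :: "real poly"
  assumes "degree P \<le> K"
  shows "poly P x = (\<Sum>n\<le>K. coeff P n * x^n)"
  unfolding poly_altdef
  by (rule sum.mono_neutral_left) (use assms in \<open>auto simp: coeff_eq_0\<close>)

lemma maj_sum_le:
  assumes "maj p P" "\<rho> \<ge> 0"
  shows "(\<Sum>n\<le>N. \<bar>coeff p n\<bar> * \<rho>^n) \<le> poly P \<rho>"
proof -
  have "(\<Sum>n\<le>N. \<bar>coeff p n\<bar> * \<rho>^n) \<le> (\<Sum>n\<le>N. coeff P n * \<rho>^n)"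
    by (rule sum_mono, rule mult_right_mono) (use assms in \<open>auto simp: maj_def\<close>)
  also have "\<dots> \<le> (\<Sum>n\<le>max N (degree P). coeff P n * \<rho>^n)"
    by (rule sum_mono2) (use assms maj_nonneg[OF assms(1)] in auto)
  also have "\<dots> = poly P \<rho>" by (rule poly_as_sum_ge[symmetric]) simp
  finally show ?thesis .
qed

lemma maj_coeff_le:
  assumes "maj p P" "\<rho> \<ge> 0"
  shows "\<bar>coeff p n\<bar> * \<rho>^n \<le> poly P \<rho>"
proof -
  have "\<bar>coeff p n\<bar> * \<rho>^n \<le> (\<Sum>k\<le>n. \<bar>coeff p k\<bar> * \<rho>^k)"
    by (rule member_le_sum) (use assms in auto)
  also have "\<dots> \<le> poly P \<rho>" by (rule maj_sum_le[OF assms])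
  finally show ?thesis .
qed

definition pp :: "('d::finite \<Rightarrow> nat) \<Rightarrow> real^'d \<Rightarrow> real^'d \<Rightarrow> real poly" where
  "pp \<mu> w h = (\<Prod>i\<in>UNIV. [:w$i, h$i:] ^ \<mu> i)"

definition PP :: "('d::finite \<Rightarrow> nat) \<Rightarrow> real^'d \<Rightarrow> real^'d \<Rightarrow> real poly" where
  "PP \<mu> w h = (\<Prod>i\<in>UNIV. [:\<bar>w$i\<bar>, \<bar>h$i\<bar>:] ^ \<mu> i)"

lemma maj_pp: "maj (pp \<mu> w h) (PP \<mu> w h)"
  unfolding pp_def PP_def by (intro maj_prod maj_power maj_lin) auto

lemma poly_pp: "poly (pp \<mu> w h) s = (\<Prod>i\<in>UNIV. (w$i + s * h$i) ^ \<mu> i)"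
  unfolding pp_def by (simp add: poly_prod)

lemma poly_PP: "poly (PP \<mu> w h) s = (\<Prod>i\<in>UNIV. (\<bar>w$i\<bar> + s * \<bar>h$i\<bar>) ^ \<mu> i)"
  unfolding PP_def by (simp add: poly_prod)

lemma poly_PP_le:
  assumes "\<forall>i. \<bar>w$i\<bar> \<le> r" "\<forall>i. \<bar>h$i\<bar> \<le> 1" "0 \<le> \<rho>" "\<rho> \<le> r"
  shows "poly (PP \<mu> w h) \<rho> \<le> (2*r) ^ sum \<mu> UNIV"
proof -
  have "poly (PP \<mu> w h) \<rho> \<le> (\<Prod>i\<in>UNIV. (2*r) ^ \<mu> i)"
    unfolding poly_PP
  proof (rule prod_mono, rule conjI)
    fix i
    have "\<rho> * \<bar>h$i\<bar> \<le> r" using assms by (metis abs_ge_zero mult_left_le mult.commute order_trans)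
    then show "(\<bar>w$i\<bar> + \<rho> * \<bar>h$i\<bar>) ^ \<mu> i \<le> (2*r) ^ \<mu> i"
      using assms(1)[rule_format, of i] assms(3) by (intro power_mono) auto
  qed (use assms in auto)
  also have "\<dots> = (2*r) ^ sum \<mu> UNIV" by (simp add: power_sum)
  finally show ?thesis .
qed

lemma prod_monom: "finite S \<Longrightarrow> (\<Prod>i\<in>S. monom (f i) (g i)) = monom (\<Prod>i\<in>S. f i) (\<Sum>i\<in>S. g i)"
  by (induction S rule: finite_induct) (auto simp: mult_monom monom_0 one_pCons)

lemma pp_zero: "pp \<mu> 0 h = monom (mnm \<mu> h) (sum \<mu> UNIV)"
proof -
  have "[:0, c:] = monom c 1" for c :: real
    by (simp add: monom_Suc monom_0)
  then have "pp \<mu> 0 h = (\<Prod>i\<in>UNIV. monom ((h$i) ^ \<mu> i) (\<mu> i))"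
    unfolding pp_def by (simp add: monom_power)
  also have "\<dots> = monom (\<Prod>i\<in>UNIV. (h$i) ^ \<mu> i) (\<Sum>i\<in>UNIV. \<mu> i)"
    by (rule prod_monom) simp
  finally show ?thesis by (simp add: mnm_def)
qed

lemma coeff_pp_zero: "coeff (pp \<mu> 0 h) n = (if sum \<mu> UNIV = n then mnm \<mu> h else 0)"
  by (simp add: pp_zero)

lemma has_sum_poly_coeffs:
  fixes p :: "real poly"
  shows "((\<lambda>n. c * coeff p n * s^n) has_sum (c * poly p s)) UNIV"
proof -
  have "((\<lambda>n. c * coeff p n * s^n) has_sum (\<Sum>n\<le>degree p. c * coeff p n * s^n)) {..degree p}"
    by (rule has_sum_finite) simp
  moreover have "(\<Sum>n\<le>degree p. c * coeff p n * s^n) = c * poly p s"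
    by (simp add: poly_altdef sum_distrib_left mult.assoc)
  ultimately show ?thesis
    by (subst has_sum_cong_neutral[where T="{..degree p}"]) (auto simp: coeff_eq_0)
qed

lemma analytic_good_at:
  fixes F :: "real^'d::finite \<Rightarrow> real"
  assumes "real_analytic_at F y"
  shows "good_at F y"
proof -
  obtain r0 a where r0: "r0 > 0" and HS: "\<And>z. (\<forall>i. \<bar>z$i - y$i\<bar> < r0) \<Longrightarrow>
      ((\<lambda>\<mu>. a \<mu> * (\<Prod>i\<in>UNIV. (z$i - y$i)^\<mu> i)) has_sum F z) UNIV"
    using assms unfolding real_analytic_at_def by blast
  define r where "r = r0/4"
  have r: "r > 0" "2*r < r0" using r0 by (auto simp: r_def)
  define A where "A = (\<lambda>\<mu>::'d\<Rightarrow>nat. \<bar>a \<mu>\<bar> * (2*r)^sum \<mu> UNIV)"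
  have Asum: "A summable_on UNIV"
  proof -
    define z where "z = y + (\<chi> i. 2*r)"
    have "((\<lambda>\<mu>. a \<mu> * (\<Prod>i\<in>UNIV. (z$i - y$i)^\<mu> i)) has_sum F z) UNIV"
      by (rule HS) (use r in \<open>auto simp: z_def\<close>)
    moreover have "(\<lambda>\<mu>. a \<mu> * (\<Prod>i\<in>UNIV. (z$i - y$i)^\<mu> i)) = (\<lambda>\<mu>. a \<mu> * (2*r)^sum \<mu> UNIV)"
      by (simp add: z_def power_sum)
    ultimately have "(\<lambda>\<mu>. a \<mu> * (2*r)^sum \<mu> UNIV) summable_on UNIV" by (metis summable_on_def)
    then have "(\<lambda>\<mu>. norm (a \<mu> * (2*r)^sum \<mu> UNIV)) summable_on UNIV"
      by (rule summable_on_iff_abs_summable_on_real[THEN iffD1])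
    moreover have "(\<lambda>\<mu>. norm (a \<mu> * (2*r)^sum \<mu> UNIV)) = A"
      using r by (auto simp: A_def abs_mult)
    ultimately show ?thesis by simp
  qed
  have A0: "A \<mu> \<ge> 0" for \<mu> using r by (simp add: A_def)
  define M where "M = infsum A UNIV"
  have M0: "M \<ge> 0" unfolding M_def by (rule infsum_nonneg) (use A0 in auto)
  define C where "C = (\<lambda>n w h. infsum (\<lambda>\<mu>. a \<mu> * coeff (pp \<mu> w h) n) UNIV)"
  have KB: "\<bar>a \<mu> * coeff (pp \<mu> w h) n\<bar> * \<rho>^n \<le> A \<mu>"
    if w: "\<forall>i. \<bar>w$i\<bar> \<le> r" and h: "\<forall>i. \<bar>h$i\<bar> \<le> 1" and \<rho>: "0 \<le> \<rho>" "\<rho> \<le> r" for \<mu> w h n \<rho>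
  proof -
    have "\<bar>a \<mu> * coeff (pp \<mu> w h) n\<bar> * \<rho>^n = \<bar>a \<mu>\<bar> * (\<bar>coeff (pp \<mu> w h) n\<bar> * \<rho>^n)"
      by (simp add: abs_mult)
    also have "\<dots> \<le> \<bar>a \<mu>\<bar> * poly (PP \<mu> w h) \<rho>"
      by (rule mult_left_mono[OF maj_coeff_le[OF maj_pp \<rho>(1)]]) simp
    also have "\<dots> \<le> A \<mu>" unfolding A_def
      by (rule mult_left_mono[OF poly_PP_le[OF w h \<rho>]]) simp
    finally show ?thesis .
  qed
  have P: "\<forall>n. C n 0 \<in> Pn n"
  proof
    fix n
    define T where "T = {\<mu>::'d\<Rightarrow>nat. sum \<mu> UNIV = n}"
    have T: "finite T" by (rule finite_subset[OF _ MI_finite[of n]]) (auto simp: T_def MI_def)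
    have eqh: "C n 0 h = (\<Sum>\<mu>\<in>T. a \<mu> * mnm \<mu> h)" for h
    proof -
      have "C n 0 h = infsum (\<lambda>\<mu>. a \<mu> * mnm \<mu> h) T"
        unfolding C_def coeff_pp_zero
        by (rule infsum_cong_neutral) (auto simp: T_def)
      then show ?thesis using T by simp
    qed
    moreover have "(\<lambda>h. \<Sum>\<mu>\<in>T. a \<mu> * mnm \<mu> h) \<in> Pn n"
      by (rule Pn_sum[OF T]) (auto intro!: Pn.scale Pn.gen simp: T_def)
    moreover have "C n 0 = (\<lambda>h. \<Sum>\<mu>\<in>T. a \<mu> * mnm \<mu> h)" using eqh by (rule ext)
    ultimately show "C n 0 \<in> Pn n" by simp
  qed
  have B: "\<forall>n w h. (\<forall>i. \<bar>w$i\<bar> < r) \<longrightarrow> (\<forall>i. \<bar>h$i\<bar> \<le> 1) \<longrightarrow> \<bar>C n w h\<bar> \<le> M * (max 1 (1/r))^n"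
  proof (intro allI impI)
    fix n and w h :: "real^'d"
    assume w: "\<forall>i. \<bar>w$i\<bar> < r" and h: "\<forall>i. \<bar>h$i\<bar> \<le> 1"
    have w': "\<forall>i. \<bar>w$i\<bar> \<le> r" using w by (simp add: less_imp_le)
    have le: "norm (a \<mu> * coeff (pp \<mu> w h) n) \<le> norm (A \<mu> * (1/r)^n)" for \<mu>
    proof -
      have "\<bar>a \<mu> * coeff (pp \<mu> w h) n\<bar> * r^n \<le> A \<mu>" by (rule KB[OF w' h]) (use r in auto)
      then show ?thesis using r A0[of \<mu>] by (simp add: field_simps power_divide)
    qed
    have As: "(\<lambda>\<mu>. A \<mu> * (1/r)^n) summable_on UNIV" by (rule summable_on_cmult_left[OF Asum])
    then have As': "(\<lambda>\<mu>. norm (A \<mu> * (1/r)^n)) summable_on UNIV"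
      by (rule summable_on_iff_abs_summable_on_real[THEN iffD1])
    have abs1: "(\<lambda>\<mu>. norm (a \<mu> * coeff (pp \<mu> w h) n)) summable_on UNIV"
      by (rule Infinite_Sum.abs_summable_on_comparison_test[OF As'], rule le)
    have "\<bar>C n w h\<bar> \<le> infsum (\<lambda>\<mu>. norm (a \<mu> * coeff (pp \<mu> w h) n)) UNIV"
      unfolding C_def using norm_infsum_bound[OF abs1] by simp
    also have "\<dots> \<le> infsum (\<lambda>\<mu>. A \<mu> * (1/r)^n) UNIV"
      by (rule infsum_mono[OF abs1 As]) (use le A0 r in \<open>auto simp: abs_mult\<close>)
    also have "\<dots> = M * (1/r)^n" unfolding M_def by (rule infsum_cmult_left')
    also have "\<dots> \<le> M * (max 1 (1/r))^n"
      by (intro mult_left_mono power_mono M0) (use r in auto)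
    finally show "\<bar>C n w h\<bar> \<le> M * (max 1 (1/r))^n" .
  qed
  have S: "\<forall>w h s. (\<forall>i. \<bar>w$i\<bar> < r) \<longrightarrow> (\<forall>i. \<bar>h$i\<bar> \<le> 1) \<longrightarrow> \<bar>s\<bar> < r \<longrightarrow>
        (\<lambda>n. C n w h * s^n) sums F (y + w + s *\<^sub>R h)"
  proof (intro allI impI)
    fix w h :: "real^'d" and s :: real
    assume w: "\<forall>i. \<bar>w$i\<bar> < r" and h: "\<forall>i. \<bar>h$i\<bar> \<le> 1" and s: "\<bar>s\<bar> < r"
    have w': "\<forall>i. \<bar>w$i\<bar> \<le> r" using w by (simp add: less_imp_le)
    define z where "z = y + w + s *\<^sub>R h"
    define g where "g = (\<lambda>(\<mu>, n). a \<mu> * coeff (pp \<mu> w h) n * s^n)"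
    have row: "((\<lambda>n. g (\<mu>, n)) has_sum (a \<mu> * poly (pp \<mu> w h) s)) UNIV" for \<mu>
      unfolding g_def using has_sum_poly_coeffs by simp
    have rowabs: "((\<lambda>n. norm (g (\<mu>, n))) has_sum (\<Sum>n\<le>degree (pp \<mu> w h). \<bar>a \<mu> * coeff (pp \<mu> w h) n\<bar> * \<bar>s\<bar>^n)) UNIV" for \<mu>
    proof -
      have "((\<lambda>n. norm (g (\<mu>, n))) has_sum (\<Sum>n\<le>degree (pp \<mu> w h). norm (g (\<mu>, n)))) {..degree (pp \<mu> w h)}"
        by (rule has_sum_finite) simp
      then have "((\<lambda>n. norm (g (\<mu>, n))) has_sum (\<Sum>n\<le>degree (pp \<mu> w h). norm (g (\<mu>, n)))) UNIV"
        by (subst (asm) has_sum_cong_neutral[where T=UNIV]) (auto simp: g_def coeff_eq_0)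
      then show ?thesis by (simp add: g_def abs_mult power_abs)
    qed
    have rowle: "(\<Sum>n\<le>degree (pp \<mu> w h). \<bar>a \<mu> * coeff (pp \<mu> w h) n\<bar> * \<bar>s\<bar>^n) \<le> A \<mu>" for \<mu>
    proof -
      have "(\<Sum>n\<le>degree (pp \<mu> w h). \<bar>a \<mu> * coeff (pp \<mu> w h) n\<bar> * \<bar>s\<bar>^n)
          = \<bar>a \<mu>\<bar> * (\<Sum>n\<le>degree (pp \<mu> w h). \<bar>coeff (pp \<mu> w h) n\<bar> * \<bar>s\<bar>^n)"
        by (simp add: sum_distrib_left abs_mult mult.assoc)
      also have "\<dots> \<le> \<bar>a \<mu>\<bar> * poly (PP \<mu> w h) \<bar>s\<bar>"
        by (rule mult_left_mono[OF maj_sum_le[OF maj_pp]]) auto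
      also have "\<dots> \<le> A \<mu>" unfolding A_def
        by (rule mult_left_mono[OF poly_PP_le[OF w' h]]) (use s in auto)
      finally show ?thesis .
    qed
    have gabs: "(\<lambda>x. norm (g x)) summable_on (UNIV \<times> UNIV)"
    proof -
      have "(\<lambda>x. norm (g x)) summable_on Sigma UNIV (\<lambda>_. UNIV)"
        unfolding Infinite_Sum.abs_summable_on_Sigma_iff
      proof (intro conjI ballI)
        fix \<mu> :: "'d \<Rightarrow> nat"
        show "(\<lambda>n. norm (g (\<mu>, n))) summable_on UNIV" using rowabs[of \<mu>] summable_on_def by blast
      next
        have "(\<lambda>\<mu>. norm (infsum (\<lambda>n. norm (g (\<mu>, n))) UNIV)) summable_on UNIV"
        proof (rule Infinite_Sum.abs_summable_on_comparison_test)
          show "(\<lambda>\<mu>. norm (A \<mu>)) summable_on UNIV" using Asum A0 by simp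
          fix \<mu> :: "'d \<Rightarrow> nat"
          have "infsum (\<lambda>n. norm (g (\<mu>, n))) UNIV = (\<Sum>n\<le>degree (pp \<mu> w h). \<bar>a \<mu> * coeff (pp \<mu> w h) n\<bar> * \<bar>s\<bar>^n)"
            using rowabs[of \<mu>] by (simp add: infsumI)
          then show "norm (infsum (\<lambda>n. norm (g (\<mu>, n))) UNIV) \<le> norm (A \<mu>)"
            using rowle[of \<mu>] A0[of \<mu>] by (simp add: sum_nonneg)
        qed
        then show "(\<lambda>\<mu>. norm (infsum (\<lambda>n. norm (g (\<mu>, n))) UNIV)) summable_on UNIV" .
      qed
      then show ?thesis by simp
    qed
    have gsum: "g summable_on (UNIV \<times> UNIV)" by (rule abs_summable_summable[OF gabs])
    have zi: "\<forall>i. \<bar>z$i - y$i\<bar> < r0"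
    proof
      fix i
      have "\<bar>s * h$i\<bar> \<le> r" using s h by (simp add: abs_mult) (metis abs_ge_zero less_imp_le mult_left_le mult.commute order_trans)
      then show "\<bar>z$i - y$i\<bar> < r0" using w[rule_format, of i] r by (simp add: z_def)
    qed
    have "((\<lambda>\<mu>. a \<mu> * poly (pp \<mu> w h) s) has_sum F z) UNIV"
      using HS[OF zi] by (simp add: poly_pp z_def)
    then have "(g has_sum F z) (Sigma UNIV (\<lambda>_. UNIV))"
      by (intro has_sum_SigmaI[OF row]) (use gsum in auto)
    then have G2: "((\<lambda>(n, \<mu>). g (\<mu>, n)) has_sum F z) (UNIV \<times> UNIV)"
      by (rule has_sum_swap[THEN iffD1])
    have rown: "((\<lambda>\<mu>. g (\<mu>, n)) has_sum (C n w h * s^n)) UNIV" for n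
    proof -
      have "(\<lambda>(n, \<mu>). g (\<mu>, n)) summable_on (UNIV \<times> UNIV)" using G2 summable_on_def by blast
      then have "(\<lambda>\<mu>. g (\<mu>, n)) summable_on UNIV"
        using summable_on_SigmaD1[of "\<lambda>n \<mu>. g (\<mu>, n)" UNIV "\<lambda>_. UNIV" n] by simp
      moreover have "infsum (\<lambda>\<mu>. g (\<mu>, n)) UNIV = C n w h * s^n"
        unfolding g_def C_def by (simp add: infsum_cmult_left')
      ultimately show ?thesis by (metis has_sum_infsum)
    qed
    have "((\<lambda>n. C n w h * s^n) has_sum F z) UNIV"
      by (rule has_sum_SigmaD[where B="\<lambda>_. UNIV"]) (use G2 rown in auto)
    then show "(\<lambda>n. C n w h * s^n) sums F (y + w + s *\<^sub>R h)"
      unfolding z_def by (rule has_sum_imp_sums)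
  qed
  show ?thesis unfolding good_at_def
    apply (rule exI[where x=r], rule conjI, rule r(1))
    apply (rule exI[where x=M], rule conjI, rule M0)
    apply (rule exI[where x="max 1 (1/r)"], rule conjI, simp)
    apply (rule exI[where x=C])
    using P S B by blast
qed

lemma good_at_line_w:
  assumes S: "\<And>w h s. (\<forall>i. \<bar>w$i\<bar> < r) \<Longrightarrow> (\<forall>i. \<bar>h$i\<bar> \<le> 1) \<Longrightarrow> \<bar>s\<bar> < r \<Longrightarrow>
        (\<lambda>n. C n w h * s^n) sums G (y + w + s *\<^sub>R h)"
    and r: "r > 0" and w: "\<forall>i. \<bar>w$i\<bar> < r" and h: "\<forall>i. \<bar>h$i\<bar> \<le> 1"
  shows "ps_at (\<lambda>t. G (y + w + t *\<^sub>R h)) 0 (\<lambda>n. C n w h) r"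
  unfolding ps_at_def using S[OF w h] r by simp

lemma good_at_line:
  fixes h :: "real^'d::finite"
  assumes S: "\<And>w h s. (\<forall>i. \<bar>w$i\<bar> < r) \<Longrightarrow> (\<forall>i. \<bar>h$i\<bar> \<le> 1) \<Longrightarrow> \<bar>s\<bar> < r \<Longrightarrow>
        (\<lambda>n. C n w h * s^n) sums G (y + w + s *\<^sub>R h)"
    and r: "r > 0" and c: "c > 0" and h: "\<forall>i. \<bar>h$i\<bar> \<le> c"
  shows "ps_at (\<lambda>t. G (y + t *\<^sub>R h)) 0 (\<lambda>n. C n 0 ((1/c) *\<^sub>R h) * c^n) (r/c)"
  unfolding ps_at_def
proof (intro conjI allI impI)
  show "r / c > 0" using r c by simp
  fix s :: real assume s: "\<bar>s\<bar> < r / c"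
  have h1: "\<forall>i. \<bar>((1/c) *\<^sub>R h)$i\<bar> \<le> 1" using h c by (simp add: abs_mult field_simps)
  have s1: "\<bar>c * s\<bar> < r" using s c by (simp add: abs_mult field_simps)
  have "(\<lambda>n. C n 0 ((1/c) *\<^sub>R h) * (c * s)^n) sums G (y + 0 + (c * s) *\<^sub>R ((1/c) *\<^sub>R h))"
    by (rule S[OF _ h1 s1]) (use r in simp)
  moreover have "y + 0 + (c * s) *\<^sub>R ((1/c) *\<^sub>R h) = y + (0 + s) *\<^sub>R h" using c by simp
  moreover have "(\<lambda>n. C n 0 ((1/c) *\<^sub>R h) * (c * s)^n) = (\<lambda>n. C n 0 ((1/c) *\<^sub>R h) * c^n * s^n)"
    by (simp add: power_mult_distrib mult.assoc)
  ultimately show "(\<lambda>n. C n 0 ((1/c) *\<^sub>R h) * c^n * s^n) sums G (y + (0 + s) *\<^sub>R h)" using c by simp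
qed

lemma dform_coeff:
  assumes "ps_at (\<lambda>t. g (z + t *\<^sub>R h) $ i) 0 b \<rho>"
  shows "dform g n i z h = fact n * b n"
  unfolding dform_def using ps_at_derivs_val[OF assms] by simp

lemma compact_local_bound:
  fixes S :: "'a::metric_space set" and \<phi> :: "'a \<Rightarrow> 'b \<Rightarrow> real"
  assumes "compact S"
    and loc: "\<And>y. y \<in> S \<Longrightarrow> \<exists>e>0. \<exists>B. \<forall>z\<in>S. dist z y < e \<longrightarrow> (\<forall>h\<in>H. \<phi> z h \<le> B)"
  shows "\<exists>B. \<forall>z\<in>S. \<forall>h\<in>H. \<phi> z h \<le> B"
proof -
  obtain e B where eB: "\<And>y. y \<in> S \<Longrightarrow> e y > 0 \<and> (\<forall>z\<in>S. dist z y < e y \<longrightarrow> (\<forall>h\<in>H. \<phi> z h \<le> B y))"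
    using loc by metis
  obtain K where K: "K \<subseteq> S" "finite K" "S \<subseteq> (\<Union>y\<in>K. ball y (e y))"
    by (rule compactE_image[OF assms(1), of S "\<lambda>y. ball y (e y)"]) (use eB in auto)
  show ?thesis
  proof (intro exI[of _ "\<Sum>y\<in>K. \<bar>B y\<bar>"] ballI)
    fix z h assume z: "z \<in> S" and h: "h \<in> H"
    then obtain y where y: "y \<in> K" "z \<in> ball y (e y)" using K by auto
    then have "\<phi> z h \<le> B y" using eB[of y] K z h by (auto simp: dist_commute)
    also have "\<dots> \<le> \<bar>B y\<bar>" by simp
    also have "\<dots> \<le> (\<Sum>y\<in>K. \<bar>B y\<bar>)" by (rule member_le_sum) (use y K in auto)
    finally show "\<phi> z h \<le> (\<Sum>y\<in>K. \<bar>B y\<bar>)" .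
  qed
qed

lemma feature_good_at:
  assumes "real_analytic f"
  shows "good_at (\<lambda>x. (poly_feature \<nu> c \<circ> f) x $ i) y"
proof -
  have "good_at (\<lambda>x. c (\<nu> i) * (\<Prod>j\<in>UNIV. (f x $ j) ^ (\<nu> i j))) y"
  proof (intro good_at_mult good_at_const good_at_prod good_at_power)
    fix j show "good_at (\<lambda>x. f x $ j) y"
      using assms analytic_good_at unfolding real_analytic_def by blast
  qed simp
  then show ?thesis by (simp add: poly_feature_def o_def)
qed

lemma ps_at_shift: "ps_at (\<lambda>s. v (t + s)) 0 b \<rho> \<Longrightarrow> ps_at v t b \<rho>"
  unfolding ps_at_def by simp

lemma cube_compact: "compact {z::real^'d::finite. \<forall>j. \<bar>z$j\<bar> \<le> a}"
proof -
  have "{z::real^'d. \<forall>j. \<bar>z$j\<bar> \<le> a} = cbox (\<chi> j. - a) (\<chi> j. a)"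
    by (auto simp: mem_box_cart abs_le_iff) (metis minus_le_iff)+
  then show ?thesis by simp
qed

lemma mat_entry_le: "\<bar>Y $ i $ j\<bar> \<le> mat_inf_norm (Y :: real^'n::finite^'m::finite)"
proof -
  have eq: "{\<bar>Y $ i $ j\<bar> | i j. True} = (\<lambda>(i, j). \<bar>Y $ i $ j\<bar>) ` UNIV" by auto
  show ?thesis unfolding mat_inf_norm_def eq by (rule Max_ge) auto
qed

lemma mat_inf_norm_le:
  assumes "\<And>i j. \<bar>Y $ i $ j\<bar> \<le> B"
  shows "mat_inf_norm (Y :: real^'n::finite^'m::finite) \<le> B"
proof -
  have eq: "{\<bar>Y $ i $ j\<bar> | i j. True} = (\<lambda>(i, j). \<bar>Y $ i $ j\<bar>) ` UNIV" by auto
  show ?thesis unfolding mat_inf_norm_def eq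
    by (subst Max_le_iff) (use assms in auto)
qed

theorem theorem1:
  fixes Z :: "real^'n::finite^'d::finite"
    and f :: "real^'d \<Rightarrow> real^'m::finite"
    and \<nu> :: "'l::finite \<Rightarrow> ('m \<Rightarrow> nat)"
    and c :: "('m \<Rightarrow> nat) \<Rightarrow> real"
    and q q' :: nat and cz :: real
  assumes "q \<ge> 1" and "cz > 0"
    and "rank Z = min CARD('d) CARD('n)"
    and "mat_inf_norm Z \<le> cz"
    and "real_analytic f"
    and "bij_betw \<nu> UNIV (multi_indices q)"
    and "\<forall>\<mu>\<in>multi_indices q. c \<mu> \<noteq> 0"
    and "q' \<ge> 1"
    and "(CARD('d) + q') choose q' \<le> min CARD('l) CARD('n)"
  shows "\<exists>\<Phi> :: real^'n^'l.
           rank \<Phi> \<le> (CARD('d) + q') choose q' \<and>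
           mat_inf_norm ((\<chi> i j. poly_feature \<nu> c (f (column j Z)) $ i) - \<Phi>)
             \<le> cz ^ (q' + 1) / fact (q' + 1) *
                (SUP z\<in>{z. \<forall>j. \<bar>z $ j\<bar> \<le> cz}.
                   deriv_inf_norm (poly_feature \<nu> c \<circ> f) (q' + 1) z)"
proof -
  have cz: "cz > 0" by (rule assms(2))
  define g where "g = poly_feature \<nu> c \<circ> f"
  define n where "n = q' + 1"
  define G where "G = (\<lambda>i x. g x $ i)"
  have good: "good_at (G i) y" for i y
    using feature_good_at[OF assms(5)] by (simp add: G_def g_def)
  define cube1 where "cube1 = {h::real^'d. \<forall>j. \<bar>h$j\<bar> \<le> 1}"
  define cubez where "cubez = {z::real^'d. \<forall>j. \<bar>z$j\<bar> \<le> cz}"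
  have glob_i: "\<exists>K. \<forall>z\<in>cubez. \<forall>h\<in>cube1. \<bar>dform g n i z h\<bar> \<le> K" for i
  proof (rule compact_local_bound)
    show "compact cubez" unfolding cubez_def by (rule cube_compact)
    fix y0 assume "y0 \<in> cubez"
    obtain r M R C where r: "r > 0" "M \<ge> 0" "R \<ge> 1"
      and S: "\<And>w h s. (\<forall>i. \<bar>w$i\<bar> < r) \<Longrightarrow> (\<forall>i. \<bar>h$i\<bar> \<le> 1) \<Longrightarrow> \<bar>s\<bar> < r \<Longrightarrow>
        (\<lambda>n. C n w h * s^n) sums G i (y0 + w + s *\<^sub>R h)"
      and B: "\<And>n w h. (\<forall>i. \<bar>w$i\<bar> < r) \<Longrightarrow> (\<forall>i. \<bar>h$i\<bar> \<le> 1) \<Longrightarrow> \<bar>C n w h\<bar> \<le> M * R^n"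
      by (rule good_atE[OF good[of i y0]]) blast
    have "\<forall>z\<in>cubez. dist z y0 < r \<longrightarrow> (\<forall>h\<in>cube1. \<bar>dform g n i z h\<bar> \<le> fact n * (M * R^n))"
    proof (intro ballI impI)
      fix z h assume z: "z \<in> cubez" "dist z y0 < r" and h: "h \<in> cube1"
      have w: "\<forall>k. \<bar>(z - y0)$k\<bar> < r"
      proof
        fix k
        have "dist (z$k) (y0$k) \<le> dist z y0" by (rule dist_vec_nth_le)
        then show "\<bar>(z - y0)$k\<bar> < r" using z(2) by (simp add: dist_real_def)
      qed
      have h1: "\<forall>k. \<bar>h$k\<bar> \<le> 1" using h by (simp add: cube1_def)
      have "ps_at (\<lambda>t. G i (y0 + (z - y0) + t *\<^sub>R h)) 0 (\<lambda>n. C n (z - y0) h) r"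
        by (rule good_at_line_w[OF S r(1) w h1])
      then have "ps_at (\<lambda>t. g (z + t *\<^sub>R h) $ i) 0 (\<lambda>n. C n (z - y0) h) r"
        by (simp add: G_def)
      then have "dform g n i z h = fact n * C n (z - y0) h" by (rule dform_coeff)
      then show "\<bar>dform g n i z h\<bar> \<le> fact n * (M * R^n)"
        using B[OF w h1, of n] by (simp add: abs_mult)
    qed
    then show "\<exists>e>0. \<exists>B. \<forall>z\<in>cubez. dist z y0 < e \<longrightarrow> (\<forall>h\<in>cube1. \<bar>dform g n i z h\<bar> \<le> B)"
      using r(1) by blast
  qed
  obtain Kf where Kf: "\<And>i z h. z \<in> cubez \<Longrightarrow> h \<in> cube1 \<Longrightarrow> \<bar>dform g n i z h\<bar> \<le> Kf i"
    using glob_i by metis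
  define K where "K = (\<Sum>i\<in>UNIV. \<bar>Kf i\<bar>)"
  have Kle: "\<bar>dform g n i z h\<bar> \<le> K" if "z \<in> cubez" "h \<in> cube1" for i z h
  proof -
    have "\<bar>dform g n i z h\<bar> \<le> \<bar>Kf i\<bar>" using Kf[OF that, of i] by simp
    also have "\<dots> \<le> K" unfolding K_def by (rule member_le_sum) auto
    finally show ?thesis .
  qed
  have cube1_ne: "cube1 \<noteq> {}" unfolding cube1_def by (auto intro!: exI[of _ 0])
  have bddh: "bdd_above ((\<lambda>h. \<bar>dform g n i z h\<bar>) ` cube1)" if "z \<in> cubez" for i z
    using Kle[OF that] by (auto intro!: bdd_aboveI)
  have D_le: "deriv_inf_norm g n z \<le> K" if "z \<in> cubez" for z
    unfolding deriv_inf_norm_def cube1_def[symmetric]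
    by (subst Max_le_iff) (auto intro!: cSUP_least cube1_ne Kle[OF that])
  have bddz: "bdd_above ((\<lambda>z. deriv_inf_norm g n z) ` cubez)"
    using D_le by (auto intro!: bdd_aboveI)
  define SUPV where "SUPV = (SUP z\<in>cubez. deriv_inf_norm g n z)"
  have dform_le: "\<bar>dform g n i z h\<bar> \<le> SUPV" if z: "z \<in> cubez" and h: "h \<in> cube1" for i z h
  proof -
    have "\<bar>dform g n i z h\<bar> \<le> (SUP h\<in>cube1. \<bar>dform g n i z h\<bar>)"
      by (rule cSUP_upper[OF h bddh[OF z]])
    also have "\<dots> \<le> deriv_inf_norm g n z"
      unfolding deriv_inf_norm_def cube1_def[symmetric] by (rule Max_ge) auto
    also have "\<dots> \<le> SUPV" unfolding SUPV_def by (rule cSUP_upper[OF z bddz])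
    finally show ?thesis .
  qed
  have colb: "\<bar>column j Z $ k\<bar> \<le> cz" for j k
    using mat_entry_le[of Z k j] assms(4) by (simp add: column_def)
  define u where "u = (\<lambda>i j t. G i (t *\<^sub>R column j Z))"
  have ups: "ps_at (u i j) t (\<lambda>k. C k 0 ((1/cz) *\<^sub>R column j Z) * cz^k) (r/cz)"
    if S: "\<And>w h s. (\<forall>i. \<bar>w$i\<bar> < r) \<Longrightarrow> (\<forall>i. \<bar>h$i\<bar> \<le> 1) \<Longrightarrow> \<bar>s\<bar> < r \<Longrightarrow>
        (\<lambda>n. C n w h * s^n) sums G i (t *\<^sub>R column j Z + w + s *\<^sub>R h)" and r: "r > 0" for i j t r C
  proof (rule ps_at_shift)
    have "ps_at (\<lambda>s. G i (t *\<^sub>R column j Z + s *\<^sub>R column j Z)) 0 (\<lambda>k. C k 0 ((1/cz) *\<^sub>R column j Z) * cz^k) (r/cz)"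
      by (rule good_at_line[OF S r cz]) (use colb in auto)
    then show "ps_at (\<lambda>s. u i j (t + s)) 0 (\<lambda>k. C k 0 ((1/cz) *\<^sub>R column j Z) * cz^k) (r/cz)"
      by (simp add: u_def scaleR_add_left)
  qed
  have usmooth: "\<exists>b \<rho>. ps_at (u i j) t b \<rho>" for i j t
  proof -
    obtain r M R C where r: "r > 0"
      and S: "\<And>w h s. (\<forall>i. \<bar>w$i\<bar> < r) \<Longrightarrow> (\<forall>i. \<bar>h$i\<bar> \<le> 1) \<Longrightarrow> \<bar>s\<bar> < r \<Longrightarrow>
        (\<lambda>n. C n w h * s^n) sums G i (t *\<^sub>R column j Z + w + s *\<^sub>R h)"
      by (rule good_atE[OF good[of i "t *\<^sub>R column j Z"]]) blast
    show ?thesis using ups[OF S r] by blast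
  qed
  define \<Phi> :: "real^'n^'l" where "\<Phi> = (\<chi> i j. \<Sum>m<n. (deriv^^m) (u i j) 0 / fact m)"
  have err: "\<bar>poly_feature \<nu> c (f (column j Z)) $ i - \<Phi> $ i $ j\<bar> \<le> cz ^ n / fact n * SUPV" for i j
  proof -
    have "\<exists>t. (if 1 < (0::real) then 1 < t \<and> t < 0 else 0 < t \<and> t < 1) \<and>
      u i j 1 = (\<Sum>m<n. ((deriv^^m) (u i j) 0 / fact m) * (1 - 0)^m) + ((deriv^^n) (u i j) t / fact n) * (1 - 0)^n"
    proof (rule Taylor[where diff="\<lambda>m. (deriv^^m) (u i j)"])
      show "0 < n" by (simp add: n_def)
      show "(deriv^^0) (u i j) = u i j" by simp
      show "\<forall>m t. m < n \<and> 0 \<le> t \<and> t \<le> 1 \<longrightarrow>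
          ((deriv^^m) (u i j) has_real_derivative (deriv^^Suc m) (u i j) t) (at t)"
      proof (intro allI impI)
        fix m t
        obtain b \<rho> where "ps_at (u i j) t b \<rho>" using usmooth by blast
        then show "((deriv^^m) (u i j) has_real_derivative (deriv^^Suc m) (u i j) t) (at t)"
          by (rule ps_at_DERIV)
      qed
    qed auto
    then obtain \<theta> where \<theta>: "0 < \<theta>" "\<theta> < 1"
      and tay: "u i j 1 = (\<Sum>m<n. (deriv^^m) (u i j) 0 / fact m) + (deriv^^n) (u i j) \<theta> / fact n"
      by auto
    define zj where "zj = column j Z"
    define h' where "h' = (1/cz) *\<^sub>R zj"
    have h'1: "h' \<in> cube1" using colb cz by (auto simp: cube1_def h'_def zj_def abs_mult field_simps)
    have yz: "\<theta> *\<^sub>R zj \<in> cubez"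
    proof -
      have "\<bar>\<theta> * zj $ k\<bar> \<le> cz" for k
        using colb[of j k] \<theta> by (simp add: abs_mult zj_def) (metis abs_ge_zero less_imp_le mult_left_le_one_le order_trans)
      then show ?thesis by (simp add: cubez_def)
    qed
    obtain r M R C where r: "r > 0"
      and S: "\<And>w h s. (\<forall>i. \<bar>w$i\<bar> < r) \<Longrightarrow> (\<forall>i. \<bar>h$i\<bar> \<le> 1) \<Longrightarrow> \<bar>s\<bar> < r \<Longrightarrow>
        (\<lambda>n. C n w h * s^n) sums G i (\<theta> *\<^sub>R column j Z + w + s *\<^sub>R h)"
      by (rule good_atE[OF good[of i "\<theta> *\<^sub>R column j Z"]]) blast
    have "(deriv^^n) (u i j) \<theta> = fact n * (C n 0 h' * cz^n)"
      using ps_at_derivs_val[OF ups[OF S r]] by (simp add: h'_def zj_def)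
    moreover have "dform g n i (\<theta> *\<^sub>R zj) h' = fact n * (C n 0 ((1/1) *\<^sub>R h') * 1^n)"
    proof (rule dform_coeff)
      have "ps_at (\<lambda>t. G i (\<theta> *\<^sub>R column j Z + t *\<^sub>R h')) 0 (\<lambda>k. C k 0 ((1/1) *\<^sub>R h') * 1^k) (r/1)"
        by (rule good_at_line[OF S r]) (use h'1 in \<open>auto simp: cube1_def\<close>)
      then show "ps_at (\<lambda>t. g (\<theta> *\<^sub>R zj + t *\<^sub>R h') $ i) 0 (\<lambda>k. C k 0 ((1/1) *\<^sub>R h') * 1^k) (r/1)"
        by (simp add: G_def zj_def)
    qed
    ultimately have dn: "(deriv^^n) (u i j) \<theta> = cz^n * dform g n i (\<theta> *\<^sub>R zj) h'" by simp
    have "poly_feature \<nu> c (f (column j Z)) $ i = u i j 1" by (simp add: u_def G_def g_def)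
    then have "poly_feature \<nu> c (f (column j Z)) $ i - \<Phi> $ i $ j = (deriv^^n) (u i j) \<theta> / fact n"
      using tay by (simp add: \<Phi>_def)
    then have "\<bar>poly_feature \<nu> c (f (column j Z)) $ i - \<Phi> $ i $ j\<bar> = cz^n / fact n * \<bar>dform g n i (\<theta> *\<^sub>R zj) h'\<bar>"
      using cz dn by (simp add: abs_mult)
    also have "\<dots> \<le> cz^n / fact n * SUPV"
      by (rule mult_left_mono[OF dform_le[OF yz h'1]]) (use cz in simp)
    finally show ?thesis .
  qed
  have rowspan: "\<Phi> $ i \<in> span {(\<chi> j. mnm \<alpha> (column j Z)) | \<alpha>. sum \<alpha> UNIV \<le> q'}" for i
  proof -
    obtain r M R C where r: "r > 0" and P: "\<And>n. C n 0 \<in> Pn n"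
      and S: "\<And>w h s. (\<forall>i. \<bar>w$i\<bar> < r) \<Longrightarrow> (\<forall>i. \<bar>h$i\<bar> \<le> 1) \<Longrightarrow> \<bar>s\<bar> < r \<Longrightarrow>
        (\<lambda>n. C n w h * s^n) sums G i (0 *\<^sub>R column j Z + w + s *\<^sub>R h)" for j
      by (rule good_atE[OF good[of i 0]]) auto
    define p where "p = (\<lambda>z. \<Sum>m<n. C m 0 ((1/cz) *\<^sub>R z) * cz^m)"
    have pP: "p \<in> Pn q'"
      unfolding p_def
    proof (rule Pn_sum)
      fix m assume m: "m \<in> {..<n}"
      have "(\<lambda>z. cz^m * C m 0 ((1/cz) *\<^sub>R z)) \<in> Pn m" by (intro Pn.scale Pn_scale_arg P)
      then have "(\<lambda>z. cz^m * C m 0 ((1/cz) *\<^sub>R z)) \<in> Pn q'" by (rule Pn_mono) (use m in \<open>simp add: n_def\<close>)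
      then show "(\<lambda>z. C m 0 ((1/cz) *\<^sub>R z) * cz^m) \<in> Pn q'" by (simp add: mult.commute)
    qed simp
    have "\<Phi> $ i = (\<chi> j. p (column j Z))"
    proof -
      have "(deriv^^m) (u i j) 0 / fact m = C m 0 ((1/cz) *\<^sub>R column j Z) * cz^m" for j m
        using ps_at_derivs_val[OF ups[OF S r], of m] by simp
      then show ?thesis by (simp add: \<Phi>_def p_def vec_eq_iff)
    qed
    then show ?thesis using Pn_span[OF pP, of Z] by simp
  qed
  have rank: "rank \<Phi> \<le> (CARD('d) + q') choose q'"
  proof -
    define W where "W = (\<lambda>\<alpha>. \<chi> j. mnm \<alpha> (column j Z)) ` (MI q' :: ('d \<Rightarrow> nat) set)"
    have Weq: "{(\<chi> j. mnm \<alpha> (column j Z)) | \<alpha>. sum \<alpha> UNIV \<le> q'} = W"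
      by (auto simp: W_def MI_def)
    have "rows \<Phi> \<subseteq> span W"
      using rowspan Weq by (auto simp: rows_def row_def)
    then have "rank \<Phi> \<le> card W"
      unfolding row_rank_def by (rule dim_le_card) (simp add: W_def MI_finite)
    also have "\<dots> \<le> card (MI q' :: ('d \<Rightarrow> nat) set)" unfolding W_def by (rule card_image_le[OF MI_finite])
    also have "\<dots> \<le> (CARD('d) + q') choose q'" by (rule MI_card)
    finally show ?thesis .
  qed
  have "mat_inf_norm ((\<chi> i j. poly_feature \<nu> c (f (column j Z)) $ i) - \<Phi>) \<le> cz ^ n / fact n * SUPV"
    by (rule mat_inf_norm_le) (use err in simp)
  then show ?thesis using rank
    by (intro exI[of _ \<Phi>]) (simp add: n_def SUPV_def cubez_def g_def)
qed

end
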